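(* Let $p\ge5$ be a prime. Then \[ \sum_{j=2}^{p-3}B_j\equiv-\frac32\pmod p . \]
   Context: $B_j$ is the $j$th Bernoulli number ($\frac{t}{e^t-1}=\sum_{m\ge0}B_m\frac{t^m}{m!}$). For rationals whose denominators are coprime to $p$, $a\equiv b\pmod p$ means $a-b$ is $p$ times a rational with denominator coprime to $p$. *)

theory Defs
  imports Complex_Main "HOL-Computational_Algebra.Primes"
begin

text \<open>Bernoulli numbers with the convention t/(e^t - 1) = sum B_m t^m/m!, so B_1 = -1/2,
  defined by the standard recurrence sum_{k=0}^{n} (n+1 choose k) B_k = 0 for n >= 1.\<close>
fun bernoulli :: "nat \<Rightarrow> rat" where
  "bernoulli n = (if n = 0 then 1 else
     - (\<Sum>k<n. of_nat ((n + 1) choose k) * (if k < n then bernoulli k else 0))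
       / of_nat (n + 1))"

definition rat_cong :: "rat \<Rightarrow> rat \<Rightarrow> int \<Rightarrow> bool" where
  "rat_cong a b p \<longleftrightarrow>
     (\<exists>r. a - b = of_int p * r \<and> coprime (snd (quotient_of r)) p)"

lemma bernoulli_rec:
  "n > 0 \<Longrightarrow> bernoulli n = - (\<Sum>k<n. of_nat ((n + 1) choose k) * bernoulli k) / of_nat (n + 1)"
  by simp

end

theory Submission
  imports Defs "HOL-Computational_Algebra.Formal_Power_Series"
begin

declare bernoulli.simps[simp del]

definition pint :: "int \<Rightarrow> rat \<Rightarrow> bool" where
  "pint p r \<longleftrightarrow> (\<exists>a b. r = of_int a / of_int b \<and> coprime b p)"

lemma pint_coprime:
  assumes "pint p r" shows "coprime (snd (quotient_of r)) p"
proof -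
  obtain a b where r: "r = of_int a / of_int b" and cb: "coprime b p"
    using assms unfolding pint_def by blast
  obtain n d where q: "quotient_of r = (n, d)" by (cases "quotient_of r")
  have rd: "r = of_int n / of_int d" using quotient_of_div[OF q] .
  have dpos: "d > 0" using quotient_of_denom_pos[OF q] .
  have cnd: "coprime n d" using quotient_of_coprime[OF q] .
  show ?thesis
  proof (cases "b = 0")
    case True
    then have "is_unit p" using cb by simp
    then have "coprime d p" by (rule is_unit_right_imp_coprime)
    then show ?thesis by (simp add: q)
  next
    case False
    have "of_int a / of_int b = (of_int n / of_int d :: rat)" using r rd by simp
    then have "of_int (n * b) = (of_int (a * d) :: rat)" using False dpos
      by (simp add: field_simps)
    then have eq: "n * b = a * d" by (simp only: of_int_eq_iff)
    have "d dvd n * b" unfolding eq by simp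
    then have "d dvd b" using cnd by (simp add: coprime_commute coprime_dvd_mult_right_iff)
    then obtain e where "b = d * e" by blast
    then show ?thesis using cb q by simp
  qed
qed

lemma pint_int: "pint p (of_int a)"
  unfolding pint_def by (rule exI[of _ a], rule exI[of _ 1]) simp

lemma pint_add: "pint p x \<Longrightarrow> pint p y \<Longrightarrow> pint p (x + y)"
proof -
  assume "pint p x" "pint p y"
  then obtain a b c d where x: "x = of_int a / of_int b" and cb: "coprime b p"
    and y: "y = of_int c / of_int d" and cd: "coprime d p" unfolding pint_def by blast
  show ?thesis
  proof (cases "b = 0 \<or> d = 0")
    case True
    then show ?thesis using x y \<open>pint p x\<close> \<open>pint p y\<close> by auto
  next
    case False
    then have "x + y = of_int (a * d + c * b) / of_int (b * d)" using x y
      by (simp add: field_simps)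
    moreover have "coprime (b * d) p" using cb cd by simp
    ultimately show ?thesis unfolding pint_def by blast
  qed
qed

lemma pint_mult: "pint p x \<Longrightarrow> pint p y \<Longrightarrow> pint p (x * y)"
proof -
  assume "pint p x" "pint p y"
  then obtain a b c d where x: "x = of_int a / of_int b" and cb: "coprime b p"
    and y: "y = of_int c / of_int d" and cd: "coprime d p" unfolding pint_def by blast
  have "x * y = of_int (a * c) / of_int (b * d)" using x y by simp
  moreover have "coprime (b * d) p" using cb cd by simp
  ultimately show ?thesis unfolding pint_def by blast
qed

lemma pint_div: "pint p x \<Longrightarrow> coprime n p \<Longrightarrow> pint p (x / of_int n)"
proof -
  assume "pint p x" "coprime n p"
  then obtain a b where x: "x = of_int a / of_int b" and cb: "coprime b p"
    unfolding pint_def by blast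
  have "x / of_int n = of_int a / of_int (b * n)" using x by simp
  moreover have "coprime (b * n) p" using cb \<open>coprime n p\<close> by simp
  ultimately show ?thesis unfolding pint_def by blast
qed

lemma pint_sum: "(\<And>k. k \<in> A \<Longrightarrow> pint p (f k)) \<Longrightarrow> pint p (\<Sum>k\<in>A. f k)"
proof (induction A rule: infinite_finite_induct)
  case (infinite A)
  then show ?case using pint_int[of p 0] by simp
next
  case empty
  then show ?case using pint_int[of p 0] by simp
next
  case (insert x F)
  then show ?case by (simp add: pint_add)
qed

lemma pint_minus: "pint p x \<Longrightarrow> pint p (- x)"
proof -
  assume "pint p x"
  have "- x = of_int (-1) * x" by simp
  then show ?thesis using pint_mult[OF pint_int \<open>pint p x\<close>] by metis
qed

lemma bernoulli_pint:
  assumes "prime p" "n + 2 \<le> p"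
  shows "pint (int p) (bernoulli n)"
  using assms(2)
proof (induction n rule: less_induct)
  case (less n)
  show ?case
  proof (cases "n = 0")
    case True
    then show ?thesis using pint_int[of "int p" 1] by (simp add: bernoulli.simps)
  next
    case False
    have cop: "coprime (int (n + 1)) (int p)"
    proof -
      have "\<not> p dvd (n + 1)" using less.prems False by (auto dest: dvd_imp_le)
      then have "coprime p (n + 1)" using assms(1) by (simp add: prime_imp_coprime)
      then show ?thesis by (metis coprime_commute coprime_int_iff)
    qed
    have "pint (int p) (- (\<Sum>k<n. of_nat ((n + 1) choose k) * bernoulli k))"
      apply (rule pint_minus, rule pint_sum, rule pint_mult)
      using pint_int[of "int p" "int _"] less by auto
    from pint_div[OF this cop] show ?thesis using bernoulli_rec[of n] False
      by simp
  qed
qed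


unbundle fps_syntax

definition fneg :: "rat fps \<Rightarrow> rat fps" where
  "fneg f = Abs_fps (\<lambda>n. (-1)^n * f $ n)"

lemma fneg_nth[simp]: "fneg f $ n = (-1)^n * f $ n"
  by (simp add: fneg_def)

lemma fneg_mult: "fneg (f * g) = fneg f * fneg g"
proof (rule fps_ext)
  fix n
  have "fneg (f * g) $ n = (\<Sum>i=0..n. (-1)^n * (f$i * g$(n - i)))"
    by (simp add: fps_mult_nth sum_distrib_left)
  also have "\<dots> = (\<Sum>i=0..n. ((-1)^i * f$i) * ((-1)^(n-i) * g$(n - i)))"
  proof (rule sum.cong)
    fix i assume "i \<in> {0..n}"
    then have "(-1::rat)^n = (-1)^i * (-1)^(n-i)"
      by (metis atLeastAtMost_iff le_add_diff_inverse power_add)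
    then show "(-1)^n * (f$i * g$(n - i)) = ((-1)^i * f$i) * ((-1)^(n-i) * g$(n - i))"
      by simp
  qed simp
  also have "\<dots> = (fneg f * fneg g) $ n" by (simp add: fps_mult_nth)
  finally show "fneg (f * g) $ n = (fneg f * fneg g) $ n" .
qed

lemma fneg_diff: "fneg (f - g) = fneg f - fneg g"
  by (rule fps_ext) (simp add: algebra_simps)

lemma fneg_one: "fneg 1 = 1"
  by (rule fps_ext) simp

lemma fneg_X: "fneg fps_X = - fps_X"
  by (rule fps_ext) simp

lemma fneg_exp: "fneg (fps_exp 1) = fps_exp (-1)"
  by (rule fps_ext) simp

definition Ef :: "rat fps" where "Ef = Abs_fps (\<lambda>n. 1 / fact (n + 1))"
definition Bf :: "rat fps" where "Bf = Abs_fps (\<lambda>n. bernoulli n / fact n)"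

lemma XE: "fps_X * Ef = fps_exp 1 - 1"
proof (rule fps_ext)
  fix n show "(fps_X * Ef) $ n = (fps_exp 1 - 1) $ n"
    by (cases n) (simp_all add: Ef_def algebra_simps)
qed

lemma bern_rec_sum:
  assumes "n > 0"
  shows "(\<Sum>k\<le>n. of_nat ((n + 1) choose k) * bernoulli k) = 0"
proof -
  have "(\<Sum>k\<le>n. of_nat ((n + 1) choose k) * bernoulli k)
      = (\<Sum>k<n. of_nat ((n + 1) choose k) * bernoulli k) + of_nat (n + 1) * bernoulli n"
    by (simp add: lessThan_Suc_atMost[symmetric])
  also have "\<dots> = 0" using bernoulli_rec[OF assms]
    by (simp add: field_simps del: of_nat_Suc)
  finally show ?thesis .
qed

lemma BE: "Bf * Ef = 1"
proof (rule fps_ext)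
  fix n
  have "(Bf * Ef) $ n = (\<Sum>k=0..n. bernoulli k / fact k * (1 / fact (n - k + 1)))"
    by (simp add: fps_mult_nth Bf_def Ef_def)
  also have "\<dots> = (\<Sum>k=0..n. of_nat ((n + 1) choose k) * bernoulli k) / fact (n + 1)"
    unfolding sum_divide_distrib
  proof (rule sum.cong)
    fix k assume k: "k \<in> {0..n}"
    then have "Suc n - k = n - k + 1" by auto
    then have eq: "(of_nat ((n + 1) choose k) :: rat) = fact (n + 1) / (fact k * fact (n - k + 1))"
      using binomial_fact[of k "n + 1"] k by simp
    have gen: "\<And>A C F B::rat. A \<noteq> 0 \<Longrightarrow> C \<noteq> 0 \<Longrightarrow> F \<noteq> 0 \<Longrightarrow>
       B / A * (1 / C) = (F / (A * C)) * B / F" by (simp add: field_simps)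
    show "bernoulli k / fact k * (1 / fact (n - k + 1)) =
        of_nat ((n + 1) choose k) * bernoulli k / fact (n + 1)"
      unfolding eq by (rule gen) simp_all
  qed simp
  also have "\<dots> = (1 :: rat fps) $ n"
  proof (cases "n = 0")
    case True
    then show ?thesis by (simp add: bernoulli.simps)
  next
    case False
    then show ?thesis using bern_rec_sum[of n] by (simp add: atLeast0AtMost)
  qed
  finally show "(Bf * Ef) $ n = (1 :: rat fps) $ n" .
qed

lemma negE: "fneg Ef * fps_exp 1 = Ef"
proof -
  have h2: "(- fps_X) * fneg Ef = fps_exp (-1) - 1"
    using arg_cong[OF XE, of fneg] by (simp add: fneg_mult fneg_diff fneg_one fneg_X fneg_exp)
  have ee: "fps_exp (-1) * fps_exp 1 = (1 :: rat fps)"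
    by (simp add: fps_exp_add_mult[symmetric])
  have "fps_X * (fneg Ef * fps_exp 1) = - ((- fps_X) * fneg Ef * fps_exp 1)"
    by (simp add: algebra_simps)
  also have "\<dots> = - ((fps_exp (-1) - 1) * fps_exp 1)" by (simp only: h2)
  also have "\<dots> = fps_exp 1 - 1" using ee by (simp add: algebra_simps)
  also have "\<dots> = fps_X * Ef" by (simp add: XE)
  finally show ?thesis by simp
qed

lemma negB: "fneg Bf = Bf + fps_X"
proof -
  have nb: "fneg Bf * fneg Ef = 1" using arg_cong[OF BE, of fneg] by (simp add: fneg_mult fneg_one)
  have "fneg Bf = fneg Bf * (Ef * Bf)" using BE by (simp add: mult.commute)
  also have "\<dots> = fneg Bf * (fneg Ef * fps_exp 1) * Bf" by (simp add: negE mult.assoc)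
  also have "\<dots> = fps_exp 1 * Bf" using nb by (simp add: mult.assoc mult.left_commute)
  also have "\<dots> = (1 + fps_X * Ef) * Bf" by (simp add: XE)
  also have "\<dots> = Bf + fps_X" using BE by (simp add: algebra_simps)
  finally show ?thesis .
qed

lemma bernoulli_parity: "(-1)^k * bernoulli k = bernoulli k + (if k = 1 then 1 else 0)"
proof -
  have "fneg Bf $ k = (Bf + fps_X) $ k" by (simp add: negB)
  then have "(-1)^k * (bernoulli k / fact k) = bernoulli k / fact k + (if k = 1 then 1 else 0)"
    by (simp add: Bf_def)
  then show ?thesis by (auto simp: field_simps split: if_splits)
qed


lemma choose_cong:
  assumes "prime p" "k \<le> p - 1"
  shows "int p dvd ((-1)^k - int ((p - 1) choose k))"
  using assms(2)
proof (induction k)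
  case 0
  then show ?case by simp
next
  case (Suc k)
  have p1: "p = Suc (p - 1)" using prime_gt_0_nat[OF assms(1)] by simp
  have pas: "(p choose (Suc k)) = ((p - 1) choose k) + ((p - 1) choose (Suc k))"
    using binomial_Suc_Suc[of "p - 1" k] p1 by simp
  have "p dvd (p choose (Suc k))"
    using Suc.prems assms(1) by (intro dvd_choose_prime) auto
  then have d1: "int p dvd int (p choose (Suc k))" by (simp add: int_dvd_int_iff)
  have d2: "int p dvd ((-1)^k - int ((p - 1) choose k))" using Suc by simp
  have eq: "(-1)^Suc k - int ((p - 1) choose (Suc k))
      = - ((-1)^k - int ((p - 1) choose k)) - int (p choose (Suc k))"
    unfolding pas by simp
  show ?case unfolding eq by (intro dvd_diff) (simp_all only: dvd_minus_iff d1 d2)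
qed

lemma sum_split2:
  "(\<Sum>k\<le>Suc (Suc n). f k) = f 0 + f 1 + (\<Sum>k=2..Suc (Suc n). (f k :: rat))"
proof (induction n)
  case 0
  then show ?case by (simp add: numeral_2_eq_2)
next
  case (Suc n)
  then show ?case by (simp add: numeral_2_eq_2)
qed

theorem mainTheorem15:
  fixes p :: nat
  assumes "prime p" and "p \<ge> 5"
  shows "rat_cong (\<Sum>j = 2..p - 3. bernoulli j) (- 3 / 2) (int p)"
proof -
  obtain m where pm: "p = m + 5" using assms(2) by (metis add.commute le_Suc_ex)
  have "odd p" using prime_odd_nat[OF assms(1)] assms(2) by simp
  then have om: "odd (m + 3)" using pm by simp
  define S where "S = (\<Sum>j = 2..p - 3. bernoulli j)"
  have p3: "p - 3 = Suc (Suc m)" and p2: "p - 2 = Suc (Suc (Suc m))" and p1: "p - 1 = p - 2 + 1"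
    using pm by simp_all
  have R: "(\<Sum>k\<le>p - 2. of_nat ((p - 1) choose k) * bernoulli k) = 0"
    using bern_rec_sum[of "p - 2"] pm p1 by simp
  have b1: "bernoulli 1 = - 1 / 2" using bernoulli_parity[of 1] by simp
  have bl: "bernoulli (p - 2) = 0"
  proof -
    have "odd (p - 2)" using om p2 by simp
    then have "(-1)^(p-2) = (-1::rat)" by simp
    moreover have "p - 2 \<noteq> 1" using pm by simp
    ultimately show ?thesis using bernoulli_parity[of "p - 2"] by simp
  qed
  have b0: "bernoulli 0 = 1" by (simp add: bernoulli.simps)
  have Par: "(\<Sum>k\<le>p - 2. (-1)^k * bernoulli k) = (\<Sum>k\<le>p - 2. bernoulli k) + 1"
  proof -
    have "(\<Sum>k\<le>p - 2. (-1)^k * bernoulli k)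
        = (\<Sum>k\<le>p - 2. bernoulli k) + (\<Sum>k\<le>p - 2. (if k = 1 then 1 else 0 :: rat))"
      by (simp add: bernoulli_parity sum.distrib)
    also have "(\<Sum>k\<le>p - 2. (if k = 1 then 1 else 0 :: rat)) = 1"
      using pm by (simp add: sum.delta)
    finally show ?thesis .
  qed
  have Spl: "(\<Sum>k\<le>p - 2. bernoulli k) = 1 - 1/2 + S"
  proof -
    have "(\<Sum>k\<le>p - 2. bernoulli k) = (\<Sum>k\<le>p - 3. bernoulli k) + bernoulli (p - 2)"
      unfolding p2 p3 by simp
    also have "(\<Sum>k\<le>p - 3. bernoulli k) = 1 - 1/2 + S"
      unfolding S_def p3 sum_split2 using b0 b1 by simp
    finally show ?thesis using bl by simp
  qed
  define q where "q k = ((-1)^k - int ((p - 1) choose k)) div int p" for k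
  have qk: "(-1)^k - int ((p - 1) choose k) = int p * q k" if "k \<le> p - 2" for k
    unfolding q_def using choose_cong[OF assms(1), of k] that by simp
  define r where "r = (\<Sum>k\<le>p - 2. of_int (q k) * bernoulli k)"
  have "S - (- 3 / 2) = (\<Sum>k\<le>p - 2. (-1)^k * bernoulli k)
        - (\<Sum>k\<le>p - 2. of_nat ((p - 1) choose k) * bernoulli k)"
    using Par Spl R by simp
  also have "\<dots> = (\<Sum>k\<le>p - 2. of_int ((-1)^k - int ((p - 1) choose k)) * bernoulli k)"
    by (simp add: sum_subtractf[symmetric] algebra_simps)
  also have "\<dots> = (\<Sum>k\<le>p - 2. of_int (int p) * (of_int (q k) * bernoulli k))"
  proof (rule sum.cong)
    fix k assume "k \<in> {..p - 2}"
    then have e: "(-1)^k - int ((p - 1) choose k) = int p * q k" using qk by simp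
    show "of_int ((-1)^k - int ((p - 1) choose k)) * bernoulli k
        = of_int (int p) * (of_int (q k) * bernoulli k)"
      by (simp only: e of_int_mult mult.assoc)
  qed simp
  also have "\<dots> = of_int (int p) * r"
    unfolding r_def by (simp add: sum_distrib_left)
  finally have eq: "S - (- 3 / 2) = of_int (int p) * r" .
  have "pint (int p) r"
    unfolding r_def
    by (rule pint_sum, rule pint_mult[OF pint_int], rule bernoulli_pint[OF assms(1)]) (use pm in auto)
  then have "coprime (snd (quotient_of r)) (int p)" by (rule pint_coprime)
  then show ?thesis unfolding rat_cong_def S_def[symmetric] using eq by blast
qed

end
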